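(* Let $\rho$ be a density operator on $A\otimes B$ with $A\cong B\cong\mathbb{C}^d$, let $0\le\varepsilon\le1$, and let $\sigma = \Delta_\varepsilon(\rho) = (1-\varepsilon)\rho + \frac{\varepsilon}{d^2}I$. Then $D_H^2(\sigma\|\sigma_A\otimes\sigma_B)\le C\sqrt{\varepsilon} + D_H^2(\rho\|\rho_A\otimes\rho_B)$, where the constant can be taken as $C = 4+4\sqrt2$.
   Context: $\rho_A,\rho_B$ (resp. $\sigma_A,\sigma_B$) are partial traces. $D_H^2(\rho\|\sigma) = \mathrm{tr}((\sqrt\rho-\sqrt\sigma)^2)$ is the squared quantum Hellinger distance. *)

theory Defs
  imports "HOL-Analysis.Analysis"
begin

text \<open>Square complex matrices indexed by a finite type; the bipartite system
  A \<otimes> B with A = B = C^d is indexed by the product type 'd \<times> 'd, d = CARD('d).\<close>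

definition psd :: "complex^'n^'n \<Rightarrow> bool" where
  "psd M \<longleftrightarrow> (\<forall>x::complex^'n. \<exists>r::real. r \<ge> 0 \<and>
       (\<Sum>i\<in>UNIV. cnj (x $ i) * ((M *v x) $ i)) = complex_of_real r)"

definition density_op :: "complex^'n^'n \<Rightarrow> bool" where
  "density_op M \<longleftrightarrow> psd M \<and> trace M = 1"

definition msqrt :: "complex^'n^'n \<Rightarrow> complex^'n^'n" where
  "msqrt M = (THE S. psd S \<and> S ** S = M)"

definition tensor :: "complex^'a::finite^'a \<Rightarrow> complex^'b::finite^'b \<Rightarrow> complex^('a\<times>'b)^('a\<times>'b)" where
  "tensor X Y = (\<chi> p q. X $ fst p $ fst q * Y $ snd p $ snd q)"

definition ptrA :: "complex^('a::finite\<times>'b::finite)^('a\<times>'b) \<Rightarrow> complex^'a^'a" where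
  "ptrA M = (\<chi> i k. \<Sum>j\<in>UNIV. M $ (i, j) $ (k, j))"

definition ptrB :: "complex^('a::finite\<times>'b::finite)^('a\<times>'b) \<Rightarrow> complex^'b^'b" where
  "ptrB M = (\<chi> j l. \<Sum>i\<in>UNIV. M $ (i, j) $ (i, l))"

definition hellinger_sq :: "complex^'n^'n \<Rightarrow> complex^'n^'n \<Rightarrow> real" where
  "hellinger_sq R S = Re (trace ((msqrt R - msqrt S) ** (msqrt R - msqrt S)))"

definition depol :: "real \<Rightarrow> complex^('d::finite\<times>'d)^('d\<times>'d) \<Rightarrow> complex^('d\<times>'d)^('d\<times>'d)" where
  "depol \<epsilon> M = (\<chi> p q. complex_of_real (1 - \<epsilon>) * M $ p $ q
      + complex_of_real (\<epsilon> / (real CARD('d))^2) * (mat 1 :: complex^('d\<times>'d)^('d\<times>'d)) $ p $ q)"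

end

theory Submission
  imports Defs
begin


definition cinner :: "complex^'n \<Rightarrow> complex^'n \<Rightarrow> complex" where
  "cinner x y = (\<Sum>i\<in>UNIV. cnj (x $ i) * y $ i)"

definition herm :: "complex^'n^'n \<Rightarrow> bool" where
  "herm M \<longleftrightarrow> (\<forall>i j. M $ i $ j = cnj (M $ j $ i))"

definition qf :: "complex^'n^'n \<Rightarrow> complex^'n \<Rightarrow> complex" where
  "qf M x = cinner x (M *v x)"

lemma nonneg_real_iff: "(\<exists>r::real. r \<ge> 0 \<and> z = complex_of_real r) \<longleftrightarrow> Im z = 0 \<and> Re z \<ge> 0"
  by (metis complex_eq_iff complex_of_real_def complex.sel Re_complex_of_real Im_complex_of_real)

lemma psd_qf: "psd M \<longleftrightarrow> (\<forall>x. Im (qf M x) = 0 \<and> Re (qf M x) \<ge> 0)"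
  unfolding psd_def qf_def cinner_def nonneg_real_iff ..

lemma cinner_add_left: "cinner (x + y) z = cinner x z + cinner y z"
  by (simp add: cinner_def sum.distrib ring_distribs)
lemma cinner_add_right: "cinner z (x + y) = cinner z x + cinner z y"
  by (simp add: cinner_def sum.distrib ring_distribs)
lemma cinner_diff_left: "cinner (x - y) z = cinner x z - cinner y z"
  by (simp add: cinner_def sum_subtractf ring_distribs)
lemma cinner_diff_right: "cinner z (x - y) = cinner z x - cinner z y"
  by (simp add: cinner_def sum_subtractf ring_distribs)
lemma cinner_scale_left: "cinner (c *s x) z = cnj c * cinner x z"
  by (simp add: cinner_def sum_distrib_left mult_ac)
lemma cinner_scale_right: "cinner z (c *s x) = c * cinner z x"
  by (simp add: cinner_def sum_distrib_left mult_ac)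
lemma cinner_zero_left[simp]: "cinner 0 z = 0"
  by (simp add: cinner_def)
lemma cinner_zero_right[simp]: "cinner z 0 = 0"
  by (simp add: cinner_def)
lemma cinner_cnj: "cinner x y = cnj (cinner y x)"
  by (simp add: cinner_def mult.commute)
lemma cinner_axis_left: "cinner (axis i 1) y = y $ i"
  by (simp add: cinner_def axis_def if_distrib if_distribR cong: if_cong)
lemma cinner_axis_right: "cinner y (axis i 1) = cnj (y $ i)"
  by (simp add: cinner_def axis_def if_distrib if_distribR cong: if_cong)
lemma cinner_self: "cinner x x = complex_of_real (\<Sum>i\<in>UNIV. (cmod (x $ i))^2)"
proof -
  have "cnj z * z = complex_of_real ((cmod z)^2)" for z
    by (metis complex_norm_square mult.commute)
  then show ?thesis by (simp add: cinner_def of_real_sum)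
qed
lemma cinner_self_Re: "Re (cinner x x) = (norm x)^2"
  by (simp add: cinner_self norm_vec_def L2_set_def sum_nonneg)
lemma cinner_self_Im: "Im (cinner x x) = 0"
  by (simp add: cinner_self)
lemma cinner_self_eq: "cinner x x = complex_of_real ((norm x)^2)"
  by (simp add: cinner_self norm_vec_def L2_set_def sum_nonneg)
lemma cinner_self_zero: "cinner x x = 0 \<longleftrightarrow> x = 0"
  by (simp add: cinner_self_eq)

lemma mv_add: "A *v (x + y) = A *v x + A *v (y::complex^'n)"
  by (simp add: matrix_vector_right_distrib)
lemma mv_diff: "A *v (x - y) = A *v x - A *v (y::complex^'n)"
  by (simp add: vec_eq_iff matrix_vector_mult_def sum_subtractf ring_distribs)
lemma mv_scale: "A *v (c *s x) = c *s (A *v (x::complex^'n))"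
  by (simp add: vec_eq_iff matrix_vector_mult_def sum_distrib_left mult_ac)
lemma mv_axis: "(A *v axis j 1) $ i = A $ i $ j"
  by (simp add: matrix_vector_mult_def axis_def if_distrib if_distribR cong: if_cong)

lemma herm_adj: assumes "herm M" shows "cinner x (M *v y) = cinner (M *v x) y"
proof -
  have h: "\<forall>i j. M $ i $ j = cnj (M $ j $ i)" using assms herm_def by blast
  have "(\<Sum>i\<in>UNIV. cnj (x $ i) * (\<Sum>j\<in>UNIV. M $ i $ j * y $ j))
      = (\<Sum>i\<in>UNIV. \<Sum>j\<in>UNIV. cnj (x $ i) * M $ i $ j * y $ j)"
    by (simp add: sum_distrib_left mult_ac)
  also have "\<dots> = (\<Sum>j\<in>UNIV. \<Sum>i\<in>UNIV. cnj (x $ i) * M $ i $ j * y $ j)"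
    by (rule sum.swap)
  also have "\<dots> = (\<Sum>j\<in>UNIV. cnj (\<Sum>i\<in>UNIV. M $ j $ i * x $ i) * y $ j)"
  proof -
    have h': "cnj (M $ j $ i) = M $ i $ j" for i j using h by (metis complex_cnj_cnj)
    show ?thesis by (simp add: sum_distrib_right sum_distrib_left h' mult_ac)
  qed
  finally show ?thesis by (simp add: cinner_def matrix_vector_mult_def)
qed

lemma herm_qf_real: "herm M \<Longrightarrow> Im (qf M x) = 0"
  unfolding qf_def
  by (metis cinner_cnj herm_adj Reals_cnj_iff complex_is_Real_iff)

lemma qf_add: "qf M (u + v) = qf M u + qf M v + cinner u (M *v v) + cinner v (M *v u)"
  by (simp add: qf_def mv_add cinner_add_left cinner_add_right)
lemma qf_scale: "qf M (c *s u) = cnj c * c * qf M u"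
  by (simp add: qf_def mv_scale cinner_scale_left cinner_scale_right)

lemma psd_herm: assumes "psd M" shows "herm M"
proof -
  have r: "\<And>x. Im (qf M x) = 0" using assms psd_qf by blast
  have e: "cinner (axis i 1) (M *v axis j 1) = M $ i $ j" for i j
    by (simp add: cinner_axis_left mv_axis)
  have "M $ i $ j = cnj (M $ j $ i)" for i j
  proof -
    have d: "Im (M $ k $ k) = 0" for k using r[of "axis k 1"] e[of k k] by (simp add: qf_def)
    have 1: "Im (M $ i $ j + M $ j $ i) = 0"
      using r[of "axis i 1 + axis j 1"] d[of i] d[of j]
      unfolding qf_add by (simp add: qf_def e)
    have 2: "Re (M $ i $ j - M $ j $ i) = 0"
      using r[of "axis i 1 + \<i> *s axis j 1"] d[of i] d[of j]
      unfolding qf_add qf_scale by (simp add: qf_def e cinner_scale_left cinner_scale_right mv_scale)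
    show ?thesis using 1 2 by (simp add: complex_eq_iff)
  qed
  then show ?thesis unfolding herm_def by blast
qed



lemma quad_zero:
  fixes a b :: real
  assumes h: "\<And>t. a * t + b * t^2 \<ge> 0"
  shows "a = 0"
proof (rule ccontr)
  assume a: "a \<noteq> 0"
  define c where "c = \<bar>b\<bar> + 1"
  have c: "c > 0" "\<bar>b\<bar> \<le> c" by (auto simp: c_def)
  define t where "t = - a / (2 * c)"
  have 1: "a * t = -(a^2) / (2*c)" by (simp add: t_def power2_eq_square)
  have 2: "t^2 = a^2 / (4 * c^2)" by (simp add: t_def power_divide power_mult_distrib)
  have "b * t^2 \<le> c * t^2"
    using c by (metis abs_ge_self mult_right_mono order_trans zero_le_power2)
  also have "\<dots> = a^2 / (4*c)" unfolding 2 using c by (simp add: field_simps power2_eq_square)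
  finally have "a * t + b * t^2 \<le> -(a^2) / (2*c) + a^2/(4*c)" using 1 by linarith
  also have "\<dots> = -(a^2)/(4*c)" using c by (simp add: field_simps)
  also have "\<dots> < 0" using a c by simp
  finally show False using h[of t] by linarith
qed

lemma scaleR_comp: "(r *\<^sub>R x) $ i = complex_of_real r * x $ i"
  by (simp only: vector_scaleR_component) (simp add: scaleR_conv_of_real)

lemma cinner_scaleR_right: "cinner u (r *\<^sub>R x) = of_real r * cinner u x"
  by (simp add: cinner_def sum_distrib_left scaleR_comp mult_ac del: vector_scaleR_component)

lemma cinner_sum_right: "cinner u (sum g K) = (\<Sum>a\<in>K. cinner u (g a))"
  by (simp add: cinner_def sum_distrib_left sum_component; subst sum.swap; simp)

lemma cont_cinner: "continuous_on S (\<lambda>x. cinner u x)"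
  unfolding cinner_def by (intro continuous_intros)

lemma cont_qf: "continuous_on S (\<lambda>x. Re (qf H x))"
  unfolding qf_def cinner_def matrix_vector_mult_def by (intro continuous_intros)

lemma qf_scaleR: "qf H (r *\<^sub>R x) = of_real (r^2) * qf H x"
proof -
  have "r *\<^sub>R x = of_real r *s x" by (simp add: vec_eq_iff scaleR_comp del: vector_scaleR_component)
  then show ?thesis by (simp add: qf_scale power2_eq_square)
qed

lemma var_eig:
  fixes H :: "complex^'n^'n" and U :: "(complex^'n) set"
  assumes hH: "herm H"
    and inv: "\<And>u x. u \<in> U \<Longrightarrow> cinner u x = 0 \<Longrightarrow> cinner u (H *v x) = 0"
    and ne: "x0 \<noteq> 0" "\<And>u. u \<in> U \<Longrightarrow> cinner u x0 = 0"
  shows "\<exists>v \<mu>. cinner v v = 1 \<and> (\<forall>u\<in>U. cinner u v = 0) \<and> H *v v = complex_of_real \<mu> *s v"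
proof -
  define W where "W = (\<Inter>u\<in>U. {x. cinner u x = 0})"
  have Wc: "closed W" unfolding W_def
    by (intro closed_INT ballI closed_Collect_eq cont_cinner continuous_on_const)
  have Wsc: "x \<in> W \<Longrightarrow> c *s x \<in> W" for x c by (simp add: W_def cinner_scale_right)
  have WsR: "x \<in> W \<Longrightarrow> c *\<^sub>R x \<in> W" for x c by (simp add: W_def cinner_scaleR_right)
  have Wadd: "x \<in> W \<Longrightarrow> y \<in> W \<Longrightarrow> x + y \<in> W" for x y by (simp add: W_def cinner_add_right)
  have Wdiff: "x \<in> W \<Longrightarrow> y \<in> W \<Longrightarrow> x - y \<in> W" for x y by (simp add: W_def cinner_diff_right)
  have WH: "x \<in> W \<Longrightarrow> H *v x \<in> W" for x using inv by (simp add: W_def)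
  define S where "S = sphere 0 1 \<inter> W"
  have Sc: "compact S" unfolding S_def using Wc compact_sphere by blast
  have x0W: "x0 \<in> W" using ne by (simp add: W_def)
  have "(1 / norm x0) *\<^sub>R x0 \<in> S" using ne(1) WsR[OF x0W] by (simp add: S_def)
  then have Sne: "S \<noteq> {}" by blast
  obtain v where vS: "v \<in> S" and vmin: "\<And>y. y \<in> S \<Longrightarrow> Re (qf H v) \<le> Re (qf H y)"
    using continuous_attains_inf[OF Sc Sne cont_qf] by blast
  define lam where "lam = Re (qf H v)"
  have vW: "v \<in> W" and nv: "norm v = 1" using vS by (auto simp: S_def)
  have bound: "Re (qf H w) \<ge> lam * (norm w)^2" if wW: "w \<in> W" for w
  proof (cases "w = 0")
    case True then show ?thesis by (simp add: qf_def)
  next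
    case False
    let ?u = "(1 / norm w) *\<^sub>R w"
    have "?u \<in> S" using False WsR[OF wW] by (simp add: S_def)
    then have "lam \<le> Re (qf H ?u)" using vmin lam_def by blast
    also have "\<dots> = Re (qf H w) / (norm w)^2" by (simp add: qf_scaleR power_divide)
    finally show ?thesis using False by (simp add: field_simps)
  qed
  define z where "z = H *v v - complex_of_real lam *s v"
  have Rez: "Re (cinner w z) = 0" if wW: "w \<in> W" for w
  proof -
    have "2 * Re (cinner w z) * t + (Re (qf H w) - lam * (norm w)^2) * t^2 \<ge> 0" for t
    proof -
      let ?x = "v + complex_of_real t *s w"
      have xW: "?x \<in> W" using vW wW Wadd Wsc by blast
      have "Re (qf H ?x) \<ge> lam * (norm ?x)^2" using bound[OF xW] .
      moreover have "Re (qf H ?x) = lam + t^2 * Re (qf H w) + 2 * t * Re (cinner w (H *v v))"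
      proof -
        have "cinner v (H *v w) = cnj (cinner w (H *v v))"
          using herm_adj[OF hH, of v w] cinner_cnj by metis
        then show ?thesis unfolding qf_add qf_scale
          by (simp add: lam_def cinner_scale_left cinner_scale_right mv_scale power2_eq_square)
      qed
      moreover have "(norm ?x)^2 = 1 + t^2 * (norm w)^2 + 2 * t * Re (cinner w v)"
      proof -
        have "(norm ?x)^2 = Re (cinner ?x ?x)" by (simp add: cinner_self_Re)
        also have "\<dots> = Re (cinner v v) + t^2 * Re (cinner w w) + t * Re (cinner v w) + t * Re (cinner w v)"
          by (simp add: cinner_add_left cinner_add_right cinner_scale_left cinner_scale_right power2_eq_square algebra_simps)
        also have "Re (cinner v w) = Re (cinner w v)" by (subst cinner_cnj) simp
        finally show ?thesis using nv by (simp add: cinner_self_Re)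
      qed
      moreover have e4: "Re (cinner w (H *v v)) = Re (cinner w z) + lam * Re (cinner w v)"
        by (simp add: z_def cinner_diff_right cinner_scale_right)
      ultimately have "lam * (1 + t^2 * (norm w)^2 + 2 * t * Re (cinner w v))
          \<le> lam + t^2 * Re (qf H w) + 2 * t * (Re (cinner w z) + lam * Re (cinner w v))"
        by simp
      then show ?thesis by (simp add: algebra_simps)
    qed
    then have "2 * Re (cinner w z) = 0" by (rule quad_zero)
    then show ?thesis by simp
  qed
  have z0: "cinner w z = 0" if wW: "w \<in> W" for w
  proof -
    have "Re (cinner (\<i> *s w) z) = 0" using Rez Wsc[OF wW] by blast
    then have "Im (cinner w z) = 0" by (simp add: cinner_scale_left)
    then show ?thesis using Rez[OF wW] by (simp add: complex_eq_iff)
  qed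
  have zW: "z \<in> W" unfolding z_def using WH[OF vW] Wsc[OF vW] Wdiff by blast
  have "z = 0" using z0[OF zW] cinner_self_zero by blast
  then have "H *v v = complex_of_real lam *s v" by (simp add: z_def)
  moreover have "cinner v v = 1" using nv by (simp add: cinner_self_eq)
  moreover have "\<forall>u\<in>U. cinner u v = 0" using vW by (simp add: W_def)
  ultimately show ?thesis by blast
qed



definition orthon :: "('n \<Rightarrow> complex^'m) \<Rightarrow> 'n set \<Rightarrow> bool" where
  "orthon f K \<longleftrightarrow> (\<forall>a\<in>K. \<forall>b\<in>K. cinner (f a) (f b) = (if a = b then 1 else 0))"

lemma cinner_sum_scale_right:
  "cinner u (\<Sum>a\<in>K. c a *s f a) = (\<Sum>a\<in>K. c a * cinner u (f a))"
  by (simp add: cinner_sum_right cinner_scale_right)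

lemma exists_orth:
  fixes f :: "'k \<Rightarrow> complex^'n"
  assumes o: "orthon f K" and K: "finite K" and card: "card K < CARD('n)"
  shows "\<exists>x. x \<noteq> 0 \<and> (\<forall>a\<in>K. cinner (f a) x = 0)"
proof (rule ccontr)
  assume "\<not> ?thesis"
  then have h: "\<And>x. (\<forall>a\<in>K. cinner (f a) x = 0) \<Longrightarrow> x = 0" by blast
  have exp: "x = (\<Sum>a\<in>K. cinner (f a) x *s f a)" for x
  proof -
    let ?y = "x - (\<Sum>a\<in>K. cinner (f a) x *s f a)"
    have "cinner (f b) ?y = 0" if b: "b \<in> K" for b
    proof -
      have "(\<Sum>a\<in>K. cinner (f a) x * cinner (f b) (f a)) = (\<Sum>a\<in>K. if a = b then cinner (f a) x else 0)"
        using o b by (intro sum.cong) (auto simp: orthon_def)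
      also have "\<dots> = cinner (f b) x" using b K by simp
      finally show ?thesis by (simp add: cinner_diff_right cinner_sum_scale_right)
    qed
    then have "?y = 0" using h by blast
    then show ?thesis by simp
  qed
  have one: "(\<Sum>a\<in>K. cnj (f a $ j) * f a $ j) = 1" for j
  proof -
    have "(axis j 1 :: complex^'n) $ j = (\<Sum>a\<in>K. cinner (f a) (axis j 1) *s f a) $ j"
      using exp by metis
    then show ?thesis by (simp add: cinner_axis_right)
  qed
  have "of_nat CARD('n) = (\<Sum>j\<in>(UNIV::'n set). \<Sum>a\<in>K. cnj (f a $ j) * f a $ j)"
    by (simp add: one)
  also have "\<dots> = (\<Sum>a\<in>K. cinner (f a) (f a))"
    by (subst sum.swap) (simp add: cinner_def)
  also have "\<dots> = of_nat (card K)" using o by (simp add: orthon_def)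
  finally have "CARD('n) = card K" by (simp only: of_nat_eq_iff)
  then show False using card by simp
qed

lemma spec_ind:
  fixes H :: "complex^'n^'n" and K :: "'n set"
  assumes hH: "herm H"
  shows "\<exists>f l. orthon f K \<and> (\<forall>a\<in>K. H *v f a = complex_of_real (l a) *s f a)"
proof -
  have "finite K" by simp
  then show ?thesis
  proof (induction K rule: finite_induct)
    case empty then show ?case by (simp add: orthon_def)
  next
    case (insert k K)
    obtain f l where o: "orthon f K" and e: "\<forall>a\<in>K. H *v f a = complex_of_real (l a) *s f a"
      using insert.IH by blast
    have "card K < card (insert k K)" using insert by simp
    also have "\<dots> \<le> CARD('n)" by (rule card_mono) auto
    finally obtain x0 where x0: "x0 \<noteq> 0" "\<forall>a\<in>K. cinner (f a) x0 = 0"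
      using exists_orth[OF o insert.hyps(1)] by blast
    have inv: "cinner u (H *v x) = 0" if uK: "u \<in> f ` K" and ux: "cinner u x = 0" for u x
    proof -
      obtain a where a: "a \<in> K" "u = f a" using uK by blast
      have "cinner u (H *v x) = cinner (H *v u) x" by (rule herm_adj[OF hH])
      also have "\<dots> = cnj (complex_of_real (l a)) * cinner u x" using e a by (simp add: cinner_scale_left)
      finally show ?thesis using ux by simp
    qed
    obtain v \<mu> where v: "cinner v v = 1" "\<forall>u\<in>f ` K. cinner u v = 0" "H *v v = complex_of_real \<mu> *s v"
      using var_eig[OF hH inv, of "f ` K" x0] x0 by blast
    define f' where "f' = f(k := v)"
    define l' where "l' = l(k := \<mu>)"
    have "orthon f' (insert k K)"
      unfolding orthon_def
    proof (intro ballI)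
      fix a b assume a: "a \<in> insert k K" and b: "b \<in> insert k K"
      show "cinner (f' a) (f' b) = (if a = b then 1 else 0)"
      proof (cases "a = k"; cases "b = k")
        assume "a = k" "b = k" then show ?thesis using v by (simp add: f'_def)
      next
        assume "a = k" "b \<noteq> k"
        then have "b \<in> K" using b by simp
        then show ?thesis using v \<open>a = k\<close> \<open>b \<noteq> k\<close> by (simp add: f'_def) (metis cinner_cnj complex_cnj_zero)
      next
        assume "a \<noteq> k" "b = k"
        then have "a \<in> K" using a by simp
        then show ?thesis using v \<open>a \<noteq> k\<close> \<open>b = k\<close> by (simp add: f'_def)
      next
        assume "a \<noteq> k" "b \<noteq> k"
        then show ?thesis using a b o by (simp add: f'_def orthon_def)
      qed
    qed
    moreover have "\<forall>a\<in>insert k K. H *v f' a = complex_of_real (l' a) *s f' a"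
      using e v insert.hyps(2) by (auto simp: f'_def l'_def)
    ultimately show ?case by blast
  qed
qed

lemma spectral:
  fixes H :: "complex^'n^'n"
  assumes hH: "herm H"
  shows "\<exists>(f::'n \<Rightarrow> complex^'n) l. orthon f UNIV \<and> (\<forall>a. H *v f a = complex_of_real (l a) *s f a) \<and>
     (\<forall>r s. (\<Sum>c\<in>UNIV. f c $ r * cnj (f c $ s)) = (if r = s then 1 else 0))"
proof -
  have ex: "\<exists>(f::'n \<Rightarrow> complex^'n) l. orthon f UNIV \<and> (\<forall>a. H *v f a = complex_of_real (l a) *s f a)"
    using spec_ind[OF hH, of UNIV] by simp
  then obtain f :: "'n \<Rightarrow> complex^'n" and l where o: "orthon f UNIV" and e: "\<forall>a. H *v f a = complex_of_real (l a) *s f a"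
    by blast
  define U :: "complex^'n^'n" where "U = (\<chi> r c. f c $ r)"
  define V :: "complex^'n^'n" where "V = (\<chi> r c. cnj (f r $ c))"
  have "V ** U = mat 1"
    using o by (simp add: vec_eq_iff matrix_matrix_mult_def U_def V_def mat_def orthon_def cinner_def)
  then have "U ** V = mat 1" using matrix_left_right_inverse by blast
  then have "(\<Sum>c\<in>UNIV. f c $ r * cnj (f c $ s)) = (if r = s then 1 else 0)" for r s
    by (simp add: vec_eq_iff matrix_matrix_mult_def U_def V_def mat_def)
  then show ?thesis using o e by blast
qed



definition specmat :: "('n \<Rightarrow> complex^'n) \<Rightarrow> ('n \<Rightarrow> real) \<Rightarrow> complex^'n^'n" where
  "specmat f g = (\<chi> r s. \<Sum>c\<in>UNIV. complex_of_real (g c) * f c $ r * cnj (f c $ s))"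

definition compl :: "('n \<Rightarrow> complex^'n) \<Rightarrow> bool" where
  "compl f \<longleftrightarrow> (\<forall>r s. (\<Sum>c\<in>UNIV. f c $ r * cnj (f c $ s)) = (if r = s then 1 else 0))"

lemma spectral':
  fixes H :: "complex^'n^'n"
  assumes hH: "herm H"
  shows "\<exists>(f::'n \<Rightarrow> complex^'n) l. orthon f UNIV \<and> compl f \<and> (\<forall>a. H *v f a = complex_of_real (l a) *s f a)"
  using spectral[OF hH] unfolding compl_def by blast

lemma mv_sum: "A *v (\<Sum>a\<in>K. v a) = (\<Sum>a\<in>K. A *v v a)"
  by (simp add: vec_eq_iff matrix_vector_mult_def sum_distrib_left sum_component; subst sum.swap; simp)

lemma specmat_mv: "specmat f g *v x = (\<Sum>c\<in>UNIV. (complex_of_real (g c) * cinner (f c) x) *s f c)"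
proof -
  have "(specmat f g *v x) $ r = (\<Sum>c\<in>UNIV. (complex_of_real (g c) * cinner (f c) x) * f c $ r)" for r
  proof -
    have "(specmat f g *v x) $ r = (\<Sum>s\<in>UNIV. \<Sum>c\<in>UNIV. complex_of_real (g c) * f c $ r * cnj (f c $ s) * x $ s)"
      by (simp add: specmat_def matrix_vector_mult_def sum_distrib_right)
    also have "\<dots> = (\<Sum>c\<in>UNIV. \<Sum>s\<in>UNIV. complex_of_real (g c) * f c $ r * cnj (f c $ s) * x $ s)"
      by (rule sum.swap)
    also have "\<dots> = (\<Sum>c\<in>UNIV. (complex_of_real (g c) * cinner (f c) x) * f c $ r)"
      by (simp add: cinner_def sum_distrib_left sum_distrib_right mult_ac)
    finally show ?thesis .
  qed
  then show ?thesis by (simp add: vec_eq_iff)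
qed

lemma specmat_eig:
  assumes o: "orthon f UNIV"
  shows "specmat f g *v f d = complex_of_real (g d) *s f d"
proof -
  have "specmat f g *v f d = (\<Sum>c\<in>UNIV. (if c = d then complex_of_real (g c) *s f c else 0))"
    unfolding specmat_mv using o by (intro sum.cong) (auto simp: orthon_def)
  then show ?thesis by simp
qed

lemma qf_specmat: "qf (specmat f g) x = complex_of_real (\<Sum>c\<in>UNIV. g c * (cmod (cinner (f c) x))^2)"
proof -
  have "qf (specmat f g) x = (\<Sum>c\<in>UNIV. complex_of_real (g c) * cinner (f c) x * cinner x (f c))"
    by (simp add: qf_def specmat_mv cinner_sum_right cinner_scale_right mult_ac)
  also have "\<dots> = (\<Sum>c\<in>UNIV. complex_of_real (g c * (cmod (cinner (f c) x))^2))"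
  proof (intro sum.cong refl)
    fix c
    have "cinner (f c) x * cinner x (f c) = complex_of_real ((cmod (cinner (f c) x))^2)"
      by (metis cinner_cnj complex_norm_square)
    then show "complex_of_real (g c) * cinner (f c) x * cinner x (f c) = complex_of_real (g c * (cmod (cinner (f c) x))^2)"
      by (simp add: mult.assoc)
  qed
  finally show ?thesis by (simp add: of_real_sum)
qed

lemma specmat_psd: "(\<And>c. g c \<ge> 0) \<Longrightarrow> psd (specmat f g)"
  unfolding psd_qf qf_specmat by (simp add: sum_nonneg)

lemma specmat_mult:
  assumes o: "orthon f UNIV"
  shows "specmat f g ** specmat f h = specmat f (\<lambda>c. g c * h c)"
proof -
  have "(specmat f g ** specmat f h) *v x = specmat f (\<lambda>c. g c * h c) *v x" for x
  proof -
    have "(specmat f g ** specmat f h) *v x = specmat f g *v (specmat f h *v x)"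
      by (simp add: matrix_vector_mul_assoc)
    also have "\<dots> = (\<Sum>c\<in>UNIV. (complex_of_real (h c) * cinner (f c) x) *s (complex_of_real (g c) *s f c))"
      unfolding specmat_mv[of f h] mv_sum mv_scale specmat_eig[OF o] ..
    also have "\<dots> = specmat f (\<lambda>c. g c * h c) *v x"
      unfolding specmat_mv by (intro sum.cong refl) (simp add: mult_ac)
    finally show ?thesis .
  qed
  then show ?thesis by (simp add: matrix_eq)
qed

lemma spectral_eq:
  assumes c: "compl f" and e: "\<forall>a. H *v f a = complex_of_real (l a) *s f a"
  shows "H = specmat f l"
proof -
  have "H $ r $ s = specmat f l $ r $ s" for r s
  proof -
    have "H $ r $ s = (\<Sum>t\<in>UNIV. H $ r $ t * (if t = s then 1 else 0))"
      by (simp add: if_distrib cong: if_cong)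
    also have "\<dots> = (\<Sum>t\<in>UNIV. H $ r $ t * (\<Sum>c\<in>UNIV. f c $ t * cnj (f c $ s)))"
      using c by (simp add: compl_def)
    also have "\<dots> = (\<Sum>t\<in>UNIV. \<Sum>c\<in>UNIV. H $ r $ t * f c $ t * cnj (f c $ s))"
      by (simp add: sum_distrib_left mult_ac)
    also have "\<dots> = (\<Sum>c\<in>UNIV. (\<Sum>t\<in>UNIV. H $ r $ t * f c $ t) * cnj (f c $ s))"
      by (subst sum.swap) (simp add: sum_distrib_right)
    also have "\<dots> = (\<Sum>c\<in>UNIV. (H *v f c) $ r * cnj (f c $ s))"
      by (simp add: matrix_vector_mult_def)
    also have "\<dots> = specmat f l $ r $ s"
      using e by (simp add: specmat_def mult_ac)
    finally show ?thesis .
  qed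
  then show ?thesis by (simp add: vec_eq_iff)
qed

lemma psd_eig_nonneg:
  assumes "psd H" "H *v v = complex_of_real l *s v" "cinner v v = 1"
  shows "l \<ge> 0"
proof -
  have "qf H v = complex_of_real l" using assms(2,3) by (simp add: qf_def cinner_scale_right)
  then show ?thesis using assms(1) psd_qf by (metis Re_complex_of_real)
qed

lemma sqrt_exists:
  assumes "psd M"
  shows "\<exists>S. psd S \<and> S ** S = M"
proof -
  obtain f l where o: "orthon f UNIV" and c: "compl f" and e: "\<forall>a. M *v f a = complex_of_real (l a) *s f a"
    using spectral'[OF psd_herm[OF assms]] by blast
  have l: "l a \<ge> 0" for a
    using psd_eig_nonneg[OF assms e[rule_format, of a]] o by (simp add: orthon_def)
  let ?S = "specmat f (\<lambda>c. sqrt (l c))"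
  have "psd ?S" using l by (intro specmat_psd) simp
  moreover have "?S ** ?S = M"
    unfolding specmat_mult[OF o] using l spectral_eq[OF c e] by simp
  ultimately show ?thesis by blast
qed

lemma herm_diff: "herm A \<Longrightarrow> herm B \<Longrightarrow> herm (A - B)"
  unfolding herm_def by (metis complex_cnj_diff vector_minus_component)

lemma herm_nonzero_eig:
  assumes "herm D" "D \<noteq> 0"
  shows "\<exists>v \<mu>. cinner v v = 1 \<and> \<mu> \<noteq> 0 \<and> D *v v = complex_of_real \<mu> *s v"
proof (rule ccontr)
  assume n: "\<not> ?thesis"
  obtain f l where o: "orthon f UNIV" and c: "compl f" and e: "\<forall>a. D *v f a = complex_of_real (l a) *s f a"
    using spectral'[OF assms(1)] by blast
  have "l a = 0" for a
  proof -
    have "cinner (f a) (f a) = 1" using o by (simp add: orthon_def)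
    then show ?thesis using n e by blast
  qed
  then have "D = 0" using spectral_eq[OF c e] by (simp add: specmat_def vec_eq_iff)
  then show False using assms(2) by simp
qed

lemma psd_qf_zero:
  assumes "psd S" "qf S v = 0"
  shows "S *v v = 0"
proof -
  obtain f l where o: "orthon f UNIV" and c: "compl f" and e: "\<forall>a. S *v f a = complex_of_real (l a) *s f a"
    using spectral'[OF psd_herm[OF assms(1)]] by blast
  have l: "l a \<ge> 0" for a
    using psd_eig_nonneg[OF assms(1) e[rule_format, of a]] o by (simp add: orthon_def)
  have S: "S = specmat f l" by (rule spectral_eq[OF c e])
  have "(\<Sum>c\<in>UNIV. l c * (cmod (cinner (f c) v))^2) = 0"
    using assms(2) unfolding S qf_specmat of_real_eq_0_iff .
  then have "\<forall>c\<in>UNIV. l c * (cmod (cinner (f c) v))^2 = 0"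
    using l by (subst sum_nonneg_eq_0_iff[symmetric]) (auto)
  then have "complex_of_real (l c) * cinner (f c) v = 0" for c by auto
  then show ?thesis unfolding S specmat_mv by (intro sum.neutral) simp
qed

lemma psd_qf_Re: "psd S \<Longrightarrow> qf S v = complex_of_real (Re (qf S v))"
  by (simp add: psd_qf complex_eq_iff)

lemma sqrt_unique:
  assumes S: "psd S" and T: "psd T" and eq: "S ** S = T ** T"
  shows "S = T"
proof (rule ccontr)
  assume "S \<noteq> T"
  then have "S - T \<noteq> 0" by simp
  then obtain v \<mu> where v: "cinner v v = 1" and mu: "\<mu> \<noteq> 0" and ev: "(S - T) *v v = complex_of_real \<mu> *s v"
    using herm_nonzero_eig[OF herm_diff[OF psd_herm[OF S] psd_herm[OF T]]] by blast
  have Dv: "S *v v - T *v v = complex_of_real \<mu> *s v"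
    using ev by (simp add: matrix_vector_mult_diff_rdistrib)
  have "S *v (S *v v) = T *v (T *v v)" using eq by (simp add: matrix_vector_mul_assoc)
  then have "0 = cinner v (S *v (S *v v - T *v v)) + cinner v ((S - T) *v (T *v v))"
    by (simp add: mv_diff cinner_diff_right matrix_vector_mult_diff_rdistrib)
  also have "cinner v ((S - T) *v (T *v v)) = cinner ((S - T) *v v) (T *v v)"
    by (rule herm_adj[OF herm_diff[OF psd_herm[OF S] psd_herm[OF T]]])
  also have "\<dots> = complex_of_real \<mu> * qf T v" using ev by (simp add: cinner_scale_left qf_def)
  also have "cinner v (S *v (S *v v - T *v v)) = complex_of_real \<mu> * qf S v"
    using Dv by (simp add: mv_scale cinner_scale_right qf_def)
  finally have "0 = complex_of_real \<mu> * (qf S v + qf T v)" by (simp add: algebra_simps)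
  then have "qf S v + qf T v = 0" using mu by simp
  then have "Re (qf S v) + Re (qf T v) = 0" by (metis plus_complex.sel(1) zero_complex.sel(1))
  moreover have "Re (qf S v) \<ge> 0" "Re (qf T v) \<ge> 0" using S T psd_qf by blast+
  ultimately have "qf S v = 0" "qf T v = 0" using psd_qf_Re S T by (metis add_nonneg_eq_0_iff of_real_0)+
  then have "S *v v = 0" "T *v v = 0" using psd_qf_zero S T by blast+
  then have "complex_of_real \<mu> *s v = 0" using Dv by simp
  then have "v = 0" using mu by (simp add: vec_eq_iff)
  then show False using v by simp
qed

lemma psd_square:
  assumes "herm S" shows "psd (S ** S)"
proof -
  have "qf (S ** S) x = cinner (S *v x) (S *v x)" for x
    using herm_adj[OF assms] by (simp add: qf_def matrix_vector_mul_assoc[symmetric])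
  then show ?thesis unfolding psd_qf by (simp add: cinner_self_eq)
qed

lemma msqrt_props:
  assumes "psd M"
  shows "psd (msqrt M)" "msqrt M ** msqrt M = M"
proof -
  have "\<exists>!S. psd S \<and> S ** S = M" using sqrt_exists[OF assms] sqrt_unique by blast
  then have "psd (msqrt M) \<and> msqrt M ** msqrt M = M" unfolding msqrt_def by (rule theI')
  then show "psd (msqrt M)" "msqrt M ** msqrt M = M" by auto
qed

lemma msqrt_eq:
  assumes "psd S" "S ** S = M"
  shows "msqrt M = S"
proof -
  have "psd M" using psd_square[OF psd_herm[OF assms(1)]] assms(2) by simp
  then show ?thesis using msqrt_props[of M] sqrt_unique assms by metis
qed



lemma mm_diff_l: "(A::complex^'n^'n) ** (B - C) = A ** B - A ** C"
  by (simp add: vec_eq_iff matrix_matrix_mult_def sum_subtractf ring_distribs)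
lemma mm_diff_r: "((A::complex^'n^'n) - B) ** C = A ** C - B ** C"
  by (simp add: vec_eq_iff matrix_matrix_mult_def sum_subtractf ring_distribs)

lemma trace_specmat:
  "trace (A ** specmat f l) = (\<Sum>c\<in>UNIV. complex_of_real (l c) * qf A (f c))"
proof -
  have "trace (A ** specmat f l) = (\<Sum>r\<in>UNIV. \<Sum>t\<in>UNIV. \<Sum>c\<in>UNIV.
      complex_of_real (l c) * (cnj (f c $ r) * (A $ r $ t * f c $ t)))"
    by (simp add: trace_def matrix_matrix_mult_def specmat_def sum_distrib_left mult_ac)
  also have "\<dots> = (\<Sum>r\<in>UNIV. \<Sum>c\<in>UNIV. \<Sum>t\<in>UNIV.
      complex_of_real (l c) * (cnj (f c $ r) * (A $ r $ t * f c $ t)))"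
    by (intro sum.cong refl sum.swap)
  also have "\<dots> = (\<Sum>c\<in>UNIV. \<Sum>r\<in>UNIV. \<Sum>t\<in>UNIV.
      complex_of_real (l c) * (cnj (f c $ r) * (A $ r $ t * f c $ t)))"
    by (rule sum.swap)
  also have "\<dots> = (\<Sum>c\<in>UNIV. complex_of_real (l c) * qf A (f c))"
    by (simp add: qf_def cinner_def matrix_vector_mult_def sum_distrib_left)
  finally show ?thesis .
qed

lemma trace_psd_psd:
  assumes A: "psd A" and B: "psd B"
  shows "Re (trace (A ** B)) \<ge> 0"
proof -
  obtain f l where o: "orthon f UNIV" and c: "compl f" and e: "\<forall>a. B *v f a = complex_of_real (l a) *s f a"
    using spectral'[OF psd_herm[OF B]] by blast
  have l: "l a \<ge> 0" for a
    using psd_eig_nonneg[OF B e[rule_format, of a]] o by (simp add: orthon_def)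
  have "B = specmat f l" by (rule spectral_eq[OF c e])
  then have "Re (trace (A ** B)) = (\<Sum>c\<in>UNIV. l c * Re (qf A (f c)))"
    by (simp add: trace_specmat)
  also have "\<dots> \<ge> 0" using l A by (intro sum_nonneg mult_nonneg_nonneg) (simp_all add: psd_qf)
  finally show ?thesis .
qed

lemma qf_diff: "qf (A - B) x = qf A x - qf B x"
  by (simp add: qf_def matrix_vector_mult_diff_rdistrib cinner_diff_right)

lemma psd_diff_qf: "herm D \<Longrightarrow> \<not> psd D \<Longrightarrow> \<exists>x. Re (qf D x) < 0"
  using herm_qf_real psd_qf by (metis not_le)

lemma sqrt_mono:
  assumes A: "psd A" and B: "psd B" and BA: "psd (B - A)"
  shows "psd (msqrt B - msqrt A)"
proof (rule ccontr)
  let ?P = "msqrt A" and ?Q = "msqrt B"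
  have P: "psd ?P" "?P ** ?P = A" using msqrt_props[OF A] by auto
  have Q: "psd ?Q" "?Q ** ?Q = B" using msqrt_props[OF B] by auto
  have hD: "herm (?Q - ?P)" using herm_diff psd_herm P Q by blast
  assume "\<not> psd (?Q - ?P)"
  then obtain x where x: "Re (qf (?Q - ?P) x) < 0" using psd_diff_qf[OF hD] by blast
  obtain f l where o: "orthon f UNIV" and c: "compl f" and e: "\<forall>a. (?Q - ?P) *v f a = complex_of_real (l a) *s f a"
    using spectral'[OF hD] by blast
  have "\<exists>a. l a < 0"
  proof (rule ccontr)
    assume "\<not> ?thesis"
    then have "l a \<ge> 0" for a by (meson not_less)
    then have "psd (specmat f l)" by (rule specmat_psd)
    then show False using x spectral_eq[OF c e] psd_qf by (metis not_le)
  qed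
  then obtain a where la: "l a < 0" by blast
  let ?v = "f a" and ?mu = "complex_of_real (l a)"
  have ev: "?Q *v ?v - ?P *v ?v = ?mu *s ?v" using e by (simp add: matrix_vector_mult_diff_rdistrib)
  have vv: "cinner ?v ?v = 1" using o by (simp add: orthon_def)
  have "qf (B - A) ?v = cinner ?v (?Q *v (?Q *v ?v)) - cinner ?v (?P *v (?P *v ?v))"
    using P Q by (simp add: qf_def matrix_vector_mul_assoc matrix_vector_mult_diff_rdistrib cinner_diff_right)
  also have "\<dots> = cinner ?v (?Q *v (?Q *v ?v - ?P *v ?v)) + cinner ?v ((?Q - ?P) *v (?P *v ?v))"
    by (simp add: mv_diff cinner_diff_right matrix_vector_mult_diff_rdistrib)
  also have "cinner ?v ((?Q - ?P) *v (?P *v ?v)) = cinner ((?Q - ?P) *v ?v) (?P *v ?v)"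
    by (rule herm_adj[OF hD])
  also have "\<dots> = ?mu * qf ?P ?v" using e by (simp add: cinner_scale_left qf_def)
  also have "cinner ?v (?Q *v (?Q *v ?v - ?P *v ?v)) = ?mu * qf ?Q ?v"
    using ev by (simp add: mv_scale cinner_scale_right qf_def)
  finally have eq: "qf (B - A) ?v = ?mu * (qf ?Q ?v + qf ?P ?v)" by (simp add: algebra_simps)
  have q1: "Re (qf ?Q ?v) \<ge> 0" "Im (qf ?Q ?v) = 0" using Q psd_qf by blast+
  have q2: "Re (qf ?P ?v) \<ge> 0" "Im (qf ?P ?v) = 0" using P psd_qf by blast+
  have "Re (qf (B - A) ?v) \<ge> 0" using BA psd_qf by blast
  then have "l a * (Re (qf ?Q ?v) + Re (qf ?P ?v)) \<ge> 0" using eq q1 q2 by simp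
  then have "Re (qf ?Q ?v) + Re (qf ?P ?v) \<le> 0" using la by (metis mult_less_0_iff not_le)
  then have "Re (qf ?Q ?v) = 0" "Re (qf ?P ?v) = 0" using q1 q2 by linarith+
  then have "Re (qf (?Q - ?P) ?v) = 0" by (simp add: qf_diff)
  moreover have "qf (?Q - ?P) ?v = ?mu" using e vv by (simp add: qf_def cinner_scale_right)
  ultimately show False using la by simp
qed

lemma scaleR_mat_comp: "((r::real) *\<^sub>R (A::complex^'n^'n)) $ i $ j = complex_of_real r * A $ i $ j"
  by (simp only: vector_scaleR_component) (simp add: scaleR_conv_of_real)

lemma qf_scaleR_mat: "qf ((r::real) *\<^sub>R A) x = complex_of_real r * qf A x"
  by (simp add: qf_def cinner_def matrix_vector_mult_def scaleR_mat_comp sum_distrib_left mult_ac del: vector_scaleR_component)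

lemma psd_scaleR: "psd A \<Longrightarrow> r \<ge> 0 \<Longrightarrow> psd (r *\<^sub>R A)"
  unfolding psd_qf qf_scaleR_mat by simp

lemma psd_add: "psd A \<Longrightarrow> psd B \<Longrightarrow> psd (A + B)"
  unfolding psd_qf by (simp add: qf_def matrix_vector_mult_add_rdistrib cinner_add_right)

lemma psd_id: "psd (mat 1 :: complex^'n^'n)"
  unfolding psd_qf by (simp add: qf_def cinner_self_eq)

lemma mm_scaleR: "((r::real) *\<^sub>R A) ** ((s::real) *\<^sub>R B) = (r * s) *\<^sub>R ((A::complex^'n^'n) ** B)"
  by (metis matrix_scalar_ac scalar_matrix_assoc scaleR_scaleR mult.commute)

lemma msqrt_scale:
  assumes "psd A" "r \<ge> 0"
  shows "msqrt (r *\<^sub>R A) = sqrt r *\<^sub>R msqrt A"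
proof (rule msqrt_eq)
  show "psd (sqrt r *\<^sub>R msqrt A)" using msqrt_props[OF assms(1)] assms(2) by (simp add: psd_scaleR)
  show "sqrt r *\<^sub>R msqrt A ** sqrt r *\<^sub>R msqrt A = r *\<^sub>R A"
    using msqrt_props[OF assms(1)] assms(2) by (simp add: mm_scaleR)
qed

lemma hell_expand:
  assumes "psd R" "psd S"
  shows "hellinger_sq R S = Re (trace R) + Re (trace S) - 2 * Re (trace (msqrt R ** msqrt S))"
proof -
  let ?X = "msqrt R" and ?Y = "msqrt S"
  have "(?X - ?Y) ** (?X - ?Y) = ?X ** ?X - ?X ** ?Y - ?Y ** ?X + ?Y ** ?Y"
    by (simp add: mm_diff_l mm_diff_r algebra_simps)
  then have "trace ((?X - ?Y) ** (?X - ?Y)) = trace R - trace (?X ** ?Y) - trace (?Y ** ?X) + trace S"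
    using msqrt_props[OF assms(1)] msqrt_props[OF assms(2)] by (simp add: trace_add trace_sub)
  then show ?thesis unfolding hellinger_sq_def by (simp add: trace_mul_sym[of ?Y ?X])
qed

definition flat :: "complex^'n^'n \<Rightarrow> complex^('n\<times>'n)" where
  "flat A = (\<chi> p. A $ fst p $ snd p)"

lemma flat_diff: "flat (A - B) = flat A - flat B"
  by (simp add: flat_def vec_eq_iff)

lemma trace_herm_sq:
  assumes "herm A"
  shows "Re (trace (A ** A)) = (norm (flat A))^2"
proof -
  have "trace (A ** A) = (\<Sum>r\<in>UNIV. \<Sum>t\<in>UNIV. A $ r $ t * cnj (A $ r $ t))"
    unfolding trace_def matrix_matrix_mult_def
  proof (simp, intro sum.cong refl)
    fix r t show "A $ r $ t * A $ t $ r = A $ r $ t * cnj (A $ r $ t)"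
      using assms unfolding herm_def by metis
  qed
  also have "\<dots> = (\<Sum>r\<in>UNIV. \<Sum>t\<in>UNIV. complex_of_real ((cmod (A $ r $ t))^2))"
    by (simp only: complex_norm_square)
  finally have "Re (trace (A ** A)) = (\<Sum>r\<in>UNIV. \<Sum>t\<in>UNIV. (cmod (A $ r $ t))^2)"
    by (simp add: Re_sum)
  also have "\<dots> = (\<Sum>p\<in>UNIV. (cmod (flat A $ p))^2)"
    by (simp add: flat_def sum.cartesian_product UNIV_Times_UNIV[symmetric] case_prod_unfold del: UNIV_Times_UNIV)
  also have "\<dots> = (norm (flat A))^2"
    by (simp add: norm_vec_def L2_set_def sum_nonneg)
  finally show ?thesis .
qed

lemma hell_norm:
  assumes "psd R" "psd S"
  shows "hellinger_sq R S = (norm (flat (msqrt R) - flat (msqrt S)))^2"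
proof -
  have "herm (msqrt R - msqrt S)"
    using herm_diff psd_herm msqrt_props assms by blast
  from trace_herm_sq[OF this] show ?thesis by (simp add: hellinger_sq_def flat_diff)
qed

lemma hell_le_2:
  assumes "psd R" "psd S" "trace R = 1" "trace S = 1"
  shows "hellinger_sq R S \<le> 2"
  using hell_expand[OF assms(1,2)] trace_psd_psd[OF msqrt_props(1)[OF assms(1)] msqrt_props(1)[OF assms(2)]] assms(3,4)
  by simp

lemma hell_close:
  assumes R: "psd R" and S: "psd S" and tR: "trace R = 1" and tS: "trace S = 1"
    and c: "0 \<le> c" and RS: "psd (S - (c^2) *\<^sub>R R)"
  shows "hellinger_sq R S \<le> 2 - 2 * c"
proof -
  have "psd (msqrt S - msqrt ((c^2) *\<^sub>R R))"
    using sqrt_mono[OF psd_scaleR[OF R] S RS] by simp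
  then have m: "psd (msqrt S - c *\<^sub>R msqrt R)" using msqrt_scale[OF R, of "c^2"] c by simp
  have "Re (trace ((msqrt S - c *\<^sub>R msqrt R) ** msqrt R)) \<ge> 0"
    by (rule trace_psd_psd[OF m msqrt_props(1)[OF R]])
  moreover have "(msqrt S - c *\<^sub>R msqrt R) ** msqrt R = msqrt S ** msqrt R - c *\<^sub>R R"
    using msqrt_props(2)[OF R] by (simp add: mm_diff_r scalar_matrix_assoc[symmetric])
  moreover have "trace (c *\<^sub>R R) = complex_of_real c * trace R"
    by (simp add: trace_def scaleR_mat_comp sum_distrib_left del: vector_scaleR_component)
  ultimately have "Re (trace (msqrt S ** msqrt R)) \<ge> c" using tR by (simp add: trace_sub)
  then show ?thesis using hell_expand[OF R S] tR tS by (simp add: trace_mul_sym[of "msqrt R"])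
qed



lemma sum_pair: "(\<Sum>p\<in>(UNIV::('a::finite\<times>'b::finite) set). g p) = (\<Sum>a\<in>UNIV. \<Sum>b\<in>UNIV. g (a,b))"
  by (simp add: UNIV_Times_UNIV[symmetric] sum.cartesian_product del: UNIV_Times_UNIV)

lemma depol_eq: "depol \<epsilon> M = (1 - \<epsilon>) *\<^sub>R M + (\<epsilon> / (real CARD('d))^2) *\<^sub>R (mat 1 :: complex^('d::finite\<times>'d)^('d\<times>'d))"
  by (simp add: depol_def vec_eq_iff scaleR_mat_comp del: vector_scaleR_component)

lemma trace_scaleR: "trace ((r::real) *\<^sub>R (A::complex^'n^'n)) = complex_of_real r * trace A"
  by (simp add: trace_def scaleR_mat_comp sum_distrib_left del: vector_scaleR_component)

lemma ptrA_comb: "ptrA (a *\<^sub>R M + b *\<^sub>R (mat 1 :: complex^('d::finite\<times>'d)^('d\<times>'d)))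
   = a *\<^sub>R ptrA M + (b * real CARD('d)) *\<^sub>R (mat 1 :: complex^'d^'d)"
  by (simp add: ptrA_def vec_eq_iff scaleR_mat_comp sum.distrib sum_distrib_left mat_def
      del: vector_scaleR_component)

lemma ptrB_comb: "ptrB (a *\<^sub>R M + b *\<^sub>R (mat 1 :: complex^('d::finite\<times>'d)^('d\<times>'d)))
   = a *\<^sub>R ptrB M + (b * real CARD('d)) *\<^sub>R (mat 1 :: complex^'d^'d)"
  by (simp add: ptrB_def vec_eq_iff scaleR_mat_comp sum.distrib sum_distrib_left mat_def
      del: vector_scaleR_component)

lemma trace_ptrA: "trace (ptrA M) = trace M"
  by (simp add: trace_def ptrA_def sum_pair)

lemma trace_ptrB: "trace (ptrB M) = trace M"
  by (simp add: trace_def ptrB_def sum_pair) (rule sum.swap)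

lemma qf_pair: "qf (M::complex^('a::finite\<times>'b::finite)^('a\<times>'b)) y =
  (\<Sum>a\<in>UNIV. \<Sum>b\<in>UNIV. \<Sum>c\<in>UNIV. \<Sum>e\<in>UNIV. cnj (y $ (a,b)) * M $ (a,b) $ (c,e) * y $ (c,e))"
  by (simp add: qf_def cinner_def matrix_vector_mult_def sum_pair sum_distrib_left mult_ac)

lemma sum_single: "(\<And>b. b \<noteq> j \<Longrightarrow> g b = 0) \<Longrightarrow> (\<Sum>b\<in>(UNIV::'b::finite set). g b) = g j"
  by (subst sum.remove[of UNIV j]) (auto intro: sum.neutral)

lemma sum_pair_single2: "(\<And>p. snd p \<noteq> j \<Longrightarrow> h p = 0) \<Longrightarrow>
   (\<Sum>p\<in>(UNIV::('a::finite\<times>'b::finite) set). h p) = (\<Sum>a\<in>UNIV. h (a,j))"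
  unfolding sum_pair by (intro sum.cong refl sum_single) auto

lemma sum_pair_single1: "(\<And>p. fst p \<noteq> i \<Longrightarrow> h p = 0) \<Longrightarrow>
   (\<Sum>p\<in>(UNIV::('a::finite\<times>'b::finite) set). h p) = (\<Sum>b\<in>UNIV. h (i,b))"
  unfolding sum_pair by (subst sum_single[of i]) auto

lemma qf_embed2:
  fixes M :: "complex^('a::finite\<times>'b::finite)^('a\<times>'b)"
  shows "qf M (\<chi> p. if snd p = j then x $ fst p else 0) =
    (\<Sum>a\<in>UNIV. cnj (x $ a) * (\<Sum>c\<in>UNIV. M $ (a,j) $ (c,j) * x $ c))"
proof -
  let ?y = "(\<chi> p. if snd p = j then x $ fst p else 0) :: complex^('a\<times>'b)"
  have inner: "(\<Sum>q\<in>UNIV. M $ p $ q * ?y $ q) = (\<Sum>c\<in>UNIV. M $ p $ (c,j) * x $ c)" for p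
    by (subst sum_pair_single2[of j]) auto
  have "qf M ?y = (\<Sum>p\<in>UNIV. cnj (?y $ p) * (\<Sum>c\<in>UNIV. M $ p $ (c,j) * x $ c))"
    unfolding qf_def cinner_def matrix_vector_mult_def inner by (simp only: vec_lambda_beta)
  also have "\<dots> = (\<Sum>a\<in>UNIV. cnj (x $ a) * (\<Sum>c\<in>UNIV. M $ (a,j) $ (c,j) * x $ c))"
    by (subst sum_pair_single2[of j]) auto
  finally show ?thesis .
qed

lemma qf_embed1:
  fixes M :: "complex^('a::finite\<times>'b::finite)^('a\<times>'b)"
  shows "qf M (\<chi> p. if fst p = i then x $ snd p else 0) =
    (\<Sum>b\<in>UNIV. cnj (x $ b) * (\<Sum>e\<in>UNIV. M $ (i,b) $ (i,e) * x $ e))"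
proof -
  let ?y = "(\<chi> p. if fst p = i then x $ snd p else 0) :: complex^('a\<times>'b)"
  have inner: "(\<Sum>q\<in>UNIV. M $ p $ q * ?y $ q) = (\<Sum>e\<in>UNIV. M $ p $ (i,e) * x $ e)" for p
    by (subst sum_pair_single1[of i]) auto
  have "qf M ?y = (\<Sum>p\<in>UNIV. cnj (?y $ p) * (\<Sum>e\<in>UNIV. M $ p $ (i,e) * x $ e))"
    unfolding qf_def cinner_def matrix_vector_mult_def inner by (simp only: vec_lambda_beta)
  also have "\<dots> = (\<Sum>b\<in>UNIV. cnj (x $ b) * (\<Sum>e\<in>UNIV. M $ (i,b) $ (i,e) * x $ e))"
    by (subst sum_pair_single1[of i]) auto
  finally show ?thesis .
qed

lemma psd_ptrA:
  assumes "psd M" shows "psd (ptrA M)"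
proof -
  have "qf (ptrA M) x = (\<Sum>j\<in>UNIV. qf M (\<chi> p. if snd p = j then x $ fst p else 0))" for x
  proof -
    have "qf (ptrA M) x = (\<Sum>a\<in>UNIV. \<Sum>c\<in>UNIV. \<Sum>j\<in>UNIV. cnj (x $ a) * M $ (a,j) $ (c,j) * x $ c)"
      by (simp add: qf_def cinner_def matrix_vector_mult_def ptrA_def sum_distrib_left sum_distrib_right mult_ac)
    also have "\<dots> = (\<Sum>a\<in>UNIV. \<Sum>j\<in>UNIV. \<Sum>c\<in>UNIV. cnj (x $ a) * M $ (a,j) $ (c,j) * x $ c)"
      by (intro sum.cong refl sum.swap)
    also have "\<dots> = (\<Sum>j\<in>UNIV. \<Sum>a\<in>UNIV. \<Sum>c\<in>UNIV. cnj (x $ a) * M $ (a,j) $ (c,j) * x $ c)"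
      by (rule sum.swap)
    also have "\<dots> = (\<Sum>j\<in>UNIV. qf M (\<chi> p. if snd p = j then x $ fst p else 0))"
      unfolding qf_embed2 by (simp add: sum_distrib_left mult_ac)
    finally show ?thesis .
  qed
  then show ?thesis using assms unfolding psd_qf by (simp add: Im_sum Re_sum sum_nonneg)
qed

lemma psd_ptrB:
  assumes "psd M" shows "psd (ptrB M)"
proof -
  have "qf (ptrB M) x = (\<Sum>i\<in>UNIV. qf M (\<chi> p. if fst p = i then x $ snd p else 0))" for x
  proof -
    have "qf (ptrB M) x = (\<Sum>b\<in>UNIV. \<Sum>e\<in>UNIV. \<Sum>i\<in>UNIV. cnj (x $ b) * M $ (i,b) $ (i,e) * x $ e)"
      by (simp add: qf_def cinner_def matrix_vector_mult_def ptrB_def sum_distrib_left sum_distrib_right mult_ac)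
    also have "\<dots> = (\<Sum>b\<in>UNIV. \<Sum>i\<in>UNIV. \<Sum>e\<in>UNIV. cnj (x $ b) * M $ (i,b) $ (i,e) * x $ e)"
      by (intro sum.cong refl sum.swap)
    also have "\<dots> = (\<Sum>i\<in>UNIV. \<Sum>b\<in>UNIV. \<Sum>e\<in>UNIV. cnj (x $ b) * M $ (i,b) $ (i,e) * x $ e)"
      by (rule sum.swap)
    also have "\<dots> = (\<Sum>i\<in>UNIV. qf M (\<chi> p. if fst p = i then x $ snd p else 0))"
      unfolding qf_embed1 by (simp add: sum_distrib_left mult_ac)
    finally show ?thesis .
  qed
  then show ?thesis using assms unfolding psd_qf by (simp add: Im_sum Re_sum sum_nonneg)
qed




lemma tensor_mult: "tensor A B ** tensor C D = tensor (A ** C) (B ** D)"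
proof -
  have "(tensor A B ** tensor C D) $ p $ q = tensor (A ** C) (B ** D) $ p $ q" for p q
  proof -
    have "(tensor A B ** tensor C D) $ p $ q = (\<Sum>t\<in>UNIV. (A $ fst p $ fst t * C $ fst t $ fst q) * (B $ snd p $ snd t * D $ snd t $ snd q))"
      by (simp add: matrix_matrix_mult_def tensor_def mult_ac)
    also have "\<dots> = (\<Sum>a\<in>UNIV. \<Sum>b\<in>UNIV. (A $ fst p $ a * C $ a $ fst q) * (B $ snd p $ b * D $ b $ snd q))"
      by (simp only: sum_pair fst_conv snd_conv)
    also have "\<dots> = (\<Sum>a\<in>UNIV. A $ fst p $ a * C $ a $ fst q) * (\<Sum>b\<in>UNIV. B $ snd p $ b * D $ b $ snd q)"
      by (simp only: sum_product)
    also have "\<dots> = tensor (A ** C) (B ** D) $ p $ q"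
      by (simp add: tensor_def matrix_matrix_mult_def)
    finally show ?thesis .
  qed
  then show ?thesis by (simp add: vec_eq_iff)
qed

lemma herm_tensor:
  assumes a: "herm A" and b: "herm B" shows "herm (tensor A B)"
proof -
  have "A $ fst p $ fst q * B $ snd p $ snd q = cnj (A $ fst q $ fst p * B $ snd q $ snd p)" for p q
    using a b unfolding herm_def by (metis complex_cnj_mult)
  then show ?thesis unfolding herm_def tensor_def by simp
qed

lemma psd_tensor:
  assumes "psd A" "psd B" shows "psd (tensor A B)"
proof -
  have "tensor A B = tensor (msqrt A) (msqrt B) ** tensor (msqrt A) (msqrt B)"
    using msqrt_props(2)[OF assms(1)] msqrt_props(2)[OF assms(2)] by (simp add: tensor_mult)
  moreover have "herm (tensor (msqrt A) (msqrt B))"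
    by (intro herm_tensor psd_herm msqrt_props(1) assms)
  ultimately show ?thesis using psd_square[of "tensor (msqrt A) (msqrt B)"] by simp
qed

lemma trace_tensor: "trace (tensor A B) = trace A * trace B"
  unfolding trace_def tensor_def sum_product by (simp only: vec_lambda_beta sum_pair fst_conv snd_conv)

lemma tensor_comb:
  fixes X :: "complex^'a::finite^'a" and Y :: "complex^'b::finite^'b"
  shows "tensor (a *\<^sub>R X + b *\<^sub>R mat 1) (a *\<^sub>R Y + b *\<^sub>R mat 1) - (a^2) *\<^sub>R tensor X Y
    = (a * b) *\<^sub>R tensor X (mat 1) + (a * b) *\<^sub>R tensor (mat 1) Y + (b^2) *\<^sub>R tensor (mat 1) (mat 1)"
proof -
  have "\<And>p q. (tensor (a *\<^sub>R X + b *\<^sub>R mat 1) (a *\<^sub>R Y + b *\<^sub>R mat 1) - (a^2) *\<^sub>R tensor X Y) $ p $ q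
    = ((a * b) *\<^sub>R tensor X (mat 1) + (a * b) *\<^sub>R tensor (mat 1) Y + (b^2) *\<^sub>R tensor (mat 1) (mat 1)) $ p $ q"
  proof -
    fix p q :: "'a \<times> 'b"
    show "?thesis p q"
      by (cases "fst p = fst q"; cases "snd p = snd q")
        (simp_all add: tensor_def scaleR_mat_comp mat_def power2_eq_square algebra_simps del: vector_scaleR_component)
  qed
  then show ?thesis by (simp add: vec_eq_iff del: vector_scaleR_component)
qed



lemma final_arith:
  fixes f x a1 a2 e :: real
  assumes "0 \<le> f" "0 \<le> x" "0 \<le> a1" "0 \<le> a2" "0 \<le> e"
    and tri: "f \<le> a1 + x + a2" and h1: "a1^2 \<le> 2*e" and h2: "a2^2 \<le> 2*e"
    and bf: "f^2 \<le> 2" and bx: "x^2 \<le> 2"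
  shows "f^2 \<le> (4 + 4 * sqrt 2) * sqrt e + x^2"
proof -
  have s2: "sqrt 2 * sqrt 2 = 2" by simp
  have s2g: "sqrt 2 \<ge> 1" by simp
  have se: "sqrt e \<ge> 0" using assms(5) by simp
  have a1: "a1 \<le> sqrt 2 * sqrt e"
    using h1 assms(3) by (metis real_le_rsqrt real_sqrt_mult)
  have a2: "a2 \<le> sqrt 2 * sqrt e"
    using h2 assms(4) by (metis real_le_rsqrt real_sqrt_mult)
  have f2: "f \<le> sqrt 2" using bf assms(1) by (metis real_le_rsqrt)
  have x2: "x \<le> sqrt 2" using bx assms(2) by (metis real_le_rsqrt)
  have c: "0 \<le> (4 + 4 * sqrt 2) * sqrt e" using se by simp
  show ?thesis
  proof (cases "f \<le> x")
    case True
    then have "f^2 \<le> x^2" using assms(1) by (simp add: power_mono)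
    then show ?thesis using c by linarith
  next
    case False
    have d: "f - x \<le> 2 * sqrt 2 * sqrt e" using tri a1 a2 by linarith
    have s: "f + x \<le> 2 * sqrt 2" using f2 x2 by linarith
    have "f^2 - x^2 = (f - x) * (f + x)" by (simp add: power2_eq_square algebra_simps)
    also have "\<dots> \<le> (2 * sqrt 2 * sqrt e) * (2 * sqrt 2)"
      using d s False assms(1,2) se by (intro mult_mono) auto
    also have "\<dots> = 8 * sqrt e" using s2 by (simp add: algebra_simps)
    also have "\<dots> \<le> (4 + 4 * sqrt 2) * sqrt e" using s2g se by (intro mult_right_mono) auto
    finally show ?thesis by simp
  qed
qed

lemma sqrt_ge_self: assumes "0 \<le> (x::real)" "x \<le> 1" shows "x \<le> sqrt x"
proof -
  have s: "0 \<le> sqrt x" "sqrt x \<le> 1" using assms by auto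
  have "x = sqrt x * sqrt x" using assms by simp
  also have "\<dots> \<le> sqrt x * 1" using s by (intro mult_left_mono) auto
  finally show ?thesis by simp
qed

theorem lemma4p4:
  fixes \<rho> :: "complex^('d::finite \<times> 'd)^('d \<times> 'd)" and \<epsilon> :: real
  assumes "density_op \<rho>" and "0 \<le> \<epsilon>" and "\<epsilon> \<le> 1"
  defines "\<sigma> \<equiv> depol \<epsilon> \<rho>"
  shows "hellinger_sq \<sigma> (tensor (ptrA \<sigma>) (ptrB \<sigma>))
           \<le> (4 + 4 * sqrt 2) * sqrt \<epsilon> + hellinger_sq \<rho> (tensor (ptrA \<rho>) (ptrB \<rho>))"
proof -
  define d where "d = real CARD('d)"
  have dpos: "d > 0" by (simp add: d_def)
  have pr: "psd \<rho>" and tr: "trace \<rho> = 1" using assms(1) by (auto simp: density_op_def)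
  have e1: "0 \<le> 1 - \<epsilon>" using assms(3) by simp
  have seq: "\<sigma> = (1 - \<epsilon>) *\<^sub>R \<rho> + (\<epsilon> / d^2) *\<^sub>R mat 1"
    unfolding \<sigma>_def depol_eq d_def ..
  have pid: "psd (mat 1 :: complex^('d\<times>'d)^('d\<times>'d))" by (rule psd_id)
  have ps: "psd \<sigma>" unfolding seq
    using pr pid e1 assms(2) by (intro psd_add psd_scaleR) auto
  have cardp: "of_nat CARD('d \<times> 'd) = complex_of_real (d^2)"
    by (simp add: d_def power2_eq_square)
  have ts: "trace \<sigma> = 1"
  proof -
    have "trace \<sigma> = complex_of_real (1-\<epsilon>) * trace \<rho> + complex_of_real (\<epsilon>/d^2) * of_nat CARD('d\<times>'d)"
      unfolding seq by (simp only: trace_add trace_scaleR trace_I)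
    also have "\<dots> = complex_of_real ((1-\<epsilon>) + \<epsilon>/d^2 * d^2)"
      unfolding cardp tr by simp
    also have "\<dots> = 1" using dpos by simp
    finally show ?thesis .
  qed
  have sr: "psd (\<sigma> - (sqrt (1 - \<epsilon>))^2 *\<^sub>R \<rho>)"
    using e1 pid assms(2) by (simp add: seq psd_scaleR)
  have h1: "hellinger_sq \<rho> \<sigma> \<le> 2 * \<epsilon>"
  proof -
    have "hellinger_sq \<rho> \<sigma> \<le> 2 - 2 * sqrt (1 - \<epsilon>)"
      by (rule hell_close[OF pr ps tr ts _ sr]) (use e1 in simp)
    moreover have "1 - \<epsilon> \<le> sqrt (1 - \<epsilon>)" using e1 assms(2) by (intro sqrt_ge_self) auto
    ultimately show ?thesis by linarith
  qed
  define b where "b = \<epsilon> / d^2 * d"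
  have b0: "b \<ge> 0" using assms(2) dpos by (simp add: b_def)
  let ?rA = "ptrA \<rho>" and ?rB = "ptrB \<rho>"
  have sA: "ptrA \<sigma> = (1 - \<epsilon>) *\<^sub>R ?rA + b *\<^sub>R mat 1"
    unfolding seq ptrA_comb b_def d_def ..
  have sB: "ptrB \<sigma> = (1 - \<epsilon>) *\<^sub>R ?rB + b *\<^sub>R mat 1"
    unfolding seq ptrB_comb b_def d_def ..
  let ?tr = "tensor ?rA ?rB" and ?ts = "tensor (ptrA \<sigma>) (ptrB \<sigma>)"
  have ptr: "psd ?tr" using pr by (intro psd_tensor psd_ptrA psd_ptrB)
  have pts: "psd ?ts" using ps by (intro psd_tensor psd_ptrA psd_ptrB)
  have ttr: "trace ?tr = 1" using tr by (simp add: trace_tensor trace_ptrA trace_ptrB)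
  have tts: "trace ?ts = 1" using ts by (simp add: trace_tensor trace_ptrA trace_ptrB)
  have st: "psd (?ts - (1 - \<epsilon>)^2 *\<^sub>R ?tr)"
    unfolding sA sB tensor_comb
    using e1 b0 pr by (intro psd_add psd_scaleR psd_tensor psd_ptrA psd_ptrB psd_id) auto
  have h2: "hellinger_sq ?tr ?ts \<le> 2 * \<epsilon>"
    using hell_close[OF ptr pts ttr tts e1 st] by simp
  define X where "X = flat (msqrt \<sigma>)"
  define P where "P = flat (msqrt \<rho>)"
  define Q where "Q = flat (msqrt ?tr)"
  define Y where "Y = flat (msqrt ?ts)"
  have L: "hellinger_sq \<sigma> ?ts = (norm (X - Y))^2" unfolding X_def Y_def by (rule hell_norm[OF ps pts])
  have R: "hellinger_sq \<rho> ?tr = (norm (P - Q))^2" unfolding P_def Q_def by (rule hell_norm[OF pr ptr])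
  have a1: "(norm (X - P))^2 \<le> 2 * \<epsilon>"
    using h1 hell_norm[OF pr ps] by (simp add: X_def P_def norm_minus_commute)
  have a2: "(norm (Q - Y))^2 \<le> 2 * \<epsilon>"
    using h2 hell_norm[OF ptr pts] by (simp add: Q_def Y_def)
  have tri: "norm (X - Y) \<le> norm (X - P) + norm (P - Q) + norm (Q - Y)"
  proof -
    have "X - Y = (X - P) + (P - Q) + (Q - Y)" by simp
    then have "norm (X - Y) \<le> norm ((X - P) + (P - Q)) + norm (Q - Y)" by (metis norm_triangle_ineq)
    also have "\<dots> \<le> norm (X - P) + norm (P - Q) + norm (Q - Y)" using norm_triangle_ineq[of "X - P" "P - Q"] by simp
    finally show ?thesis .
  qed
  have bf: "(norm (X - Y))^2 \<le> 2" using hell_le_2[OF ps pts ts tts] L by simp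
  have bx: "(norm (P - Q))^2 \<le> 2" using hell_le_2[OF pr ptr tr ttr] R by simp
  show ?thesis unfolding L R
    by (rule final_arith[OF norm_ge_zero norm_ge_zero norm_ge_zero norm_ge_zero assms(2) tri a1 a2 bf bx])
qed


end
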